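(* Let $x_0\in X^{b_0^\star}_{++}$ and let $\hat x^{x_0}$ be the unique mild solution of $x'(t)=Lx(t)-N\Phi x(t)$, $x(0)=x_0$ (i.e. $\hat x^{x_0}(t)=e^{tB}x_0$ with $B=L-N\Phi$). Then $\langle\hat x^{x_0}(t),b_0^\star\rangle=\langle x_0,b_0^\star\rangle e^{gt}$ for all $t\ge0$, where $g=(\lambda_0^\star-\rho)/\gamma$. In particular $\hat x^{x_0}(t)\in X^{b_0^\star}_{++}=\{f\in X:\langle f,b_0^\star\rangle>0\}$ for all $t\ge0$.
   Context: $X$ is either $L^p(D,\mu)$, $p\in[1,\infty)$, $\mu$ $\sigma$-finite, or $C(D)$ (sup-norm) for compact metric $D$ with Borel measure $\mu$; $X^\star$ dual, $\langle\cdot,\cdot\rangle$ pairing, $X^\star_{++}$ the functionals strictly positive on nonzero nonnegative elements. $L$ is closed, densely defined, generates a $C_0$-semigroup on $X$ preserving strict positivity; $L^\star$ its adjoint. $(Nz)(\theta)=\eta(\theta)z(\theta)$; $\eta,f:D\to(0,\infty)$ measurable; $\gamma\in(0,1)\cup(1,\infty)$; $\rho>0$. Assumptions: there exist $b_0^\star\in X^\star_{++}\cap D(L^\star)$, $\lambda_0^\star\in\mathbb R$ with $L^\star b_0^\star=\lambda_0^\star b_0^\star$; $\rho>\lambda_0^\star(1-\gamma)$; if $\gamma>1$, $(b_0^\star)^{1-\gamma}/f\in L^\infty$; if $X=C(D)$, $b_0^\star$ is a measure absolutely continuous w.r.t. $\mu$ with density denoted $b_0^\star$ and $b_0^\star,\eta,f\in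 C(D;(0,\infty))$; if $X=L^p$, $\eta,f\in L^\infty(D;(0,\infty))$, $\int_Df^{1/\gamma}(\eta b_0^\star)^{\frac{\gamma-1}{\gamma}}d\mu<\infty$ and $\int_D(f/(\eta b_0^\star))^{p/\gamma}d\mu<\infty$. $\alpha=\gamma^\gamma\big(\int_Df^{1/\gamma}(\eta b_0^\star)^{\frac{\gamma-1}{\gamma}}d\mu/(\rho-\lambda_0^\star(1-\gamma))\big)^\gamma$; $[\Phi x](\theta)=\big(\frac{f(\theta)}{\alpha\eta(\theta)b_0^\star(\theta)}\big)^{1/\gamma}\langle x,b_0^\star\rangle$. *)

theory Defs
  imports "HOL-Analysis.Analysis" "HOL-Probability.Probability"
begin

text \<open>The two function-space settings of the paper: X = L^p(D,mu) (p in [1,oo)),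
  or X = C(D) for a compact metric space (D,d).  D is always the space of the measure M.\<close>
datatype 'd space_kind = Lp real | Cont "'d \<Rightarrow> 'd \<Rightarrow> real"

definition ctop :: "'d measure \<Rightarrow> ('d \<Rightarrow> 'd \<Rightarrow> real) \<Rightarrow> 'd topology" where
  "ctop M d = Metric_space.mtopology (space M) d"

definition eq_fn :: "'d space_kind \<Rightarrow> 'd measure \<Rightarrow> ('d \<Rightarrow> real) \<Rightarrow> ('d \<Rightarrow> real) \<Rightarrow> bool" where
  "eq_fn k M g h = (case k of Lp p \<Rightarrow> (AE \<theta> in M. g \<theta> = h \<theta>)
                            | Cont d \<Rightarrow> (\<forall>\<theta>\<in>space M. g \<theta> = h \<theta>))"

definition nonneg_fn :: "'d space_kind \<Rightarrow> 'd measure \<Rightarrow> ('d \<Rightarrow> real) \<Rightarrow> bool" where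
  "nonneg_fn k M g = (case k of Lp p \<Rightarrow> (AE \<theta> in M. 0 \<le> g \<theta>)
                            | Cont d \<Rightarrow> (\<forall>\<theta>\<in>space M. 0 \<le> g \<theta>))"

definition strictpos_fn :: "'d space_kind \<Rightarrow> 'd measure \<Rightarrow> ('d \<Rightarrow> real) \<Rightarrow> bool" where
  "strictpos_fn k M g = (case k of Lp p \<Rightarrow> (AE \<theta> in M. 0 < g \<theta>)
                            | Cont d \<Rightarrow> (\<forall>\<theta>\<in>space M. 0 < g \<theta>))"

text \<open>The (real) Banach space type 'x is (isometrically) the space X; rep x is a representative
  function of the element x (chosen linearly).\<close>
definition function_space_model :: "'d space_kind \<Rightarrow> 'd measure \<Rightarrow> ('x::banach \<Rightarrow> 'd \<Rightarrow> real) \<Rightarrow> bool" where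
  "function_space_model k M rep =
    ((\<forall>x y \<theta>. rep (x + y) \<theta> = rep x \<theta> + rep y \<theta>) \<and>
     (\<forall>c x \<theta>. rep (c *\<^sub>R x) \<theta> = c * rep x \<theta>) \<and>
     (case k of
        Lp p \<Rightarrow> 1 \<le> p \<and> sigma_finite_measure M \<and>
          (\<forall>x. rep x \<in> borel_measurable M \<and> integrable M (\<lambda>\<theta>. \<bar>rep x \<theta>\<bar> powr p) \<and>
               norm x = (\<integral>\<theta>. \<bar>rep x \<theta>\<bar> powr p \<partial>M) powr (1/p)) \<and>
          (\<forall>g \<in> borel_measurable M. integrable M (\<lambda>\<theta>. \<bar>g \<theta>\<bar> powr p) \<longrightarrow>
               (\<exists>x. AE \<theta> in M. rep x \<theta> = g \<theta>))
      | Cont d \<Rightarrow> Metric_space (space M) d \<and> compact_space (ctop M d) \<and>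
          sets M = sigma_sets (space M) {U. openin (ctop M d) U} \<and>
          (\<forall>x. continuous_map (ctop M d) euclideanreal (rep x) \<and>
               norm x = (SUP \<theta>\<in>space M. \<bar>rep x \<theta>\<bar>)) \<and>
          (\<forall>g. continuous_map (ctop M d) euclideanreal g \<longrightarrow> (\<exists>x. \<forall>\<theta>\<in>space M. rep x \<theta> = g \<theta>))))"

definition c0_semigroup :: "(real \<Rightarrow> 'x::real_normed_vector \<Rightarrow> 'x) \<Rightarrow> bool" where
  "c0_semigroup T =
    ((\<forall>t\<ge>0. bounded_linear (T t)) \<and> (\<forall>x. T 0 x = x) \<and>
     (\<forall>s\<ge>0. \<forall>t\<ge>0. \<forall>x. T (s + t) x = T s (T t x)) \<and>
     (\<forall>x. ((\<lambda>t. T t x) \<longlongrightarrow> x) (at_right 0)))"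

definition is_generator :: "(real \<Rightarrow> 'x::real_normed_vector \<Rightarrow> 'x) \<Rightarrow> 'x set \<Rightarrow> ('x \<Rightarrow> 'x) \<Rightarrow> bool" where
  "is_generator T Dom A =
    (Dom = {x. \<exists>y. ((\<lambda>h. (1/h) *\<^sub>R (T h x - x)) \<longlongrightarrow> y) (at_right 0)} \<and>
     (\<forall>x\<in>Dom. ((\<lambda>h. (1/h) *\<^sub>R (T h x - x)) \<longlongrightarrow> A x) (at_right 0)))"

definition strictly_positive_functional ::
  "'d space_kind \<Rightarrow> 'd measure \<Rightarrow> ('x::real_normed_vector \<Rightarrow> 'd \<Rightarrow> real) \<Rightarrow> ('x \<Rightarrow> real) \<Rightarrow> bool" where
  "strictly_positive_functional k M rep b =
    (bounded_linear b \<and> (\<forall>x. nonneg_fn k M (rep x) \<and> x \<noteq> 0 \<longrightarrow> 0 < b x))"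

text \<open>The constant alpha of the paper (b0 denotes the density of the functional b0*).\<close>
definition alpha_const :: "'d measure \<Rightarrow> ('d \<Rightarrow> real) \<Rightarrow> ('d \<Rightarrow> real) \<Rightarrow> ('d \<Rightarrow> real)
     \<Rightarrow> real \<Rightarrow> real \<Rightarrow> real \<Rightarrow> real" where
  "alpha_const M \<eta> f bd \<gamma> \<rho> lam0 =
     \<gamma> powr \<gamma> * ((\<integral>\<theta>. f \<theta> powr (1/\<gamma>) * (\<eta> \<theta> * bd \<theta>) powr ((\<gamma> - 1)/\<gamma>) \<partial>M)
                 / (\<rho> - lam0 * (1 - \<gamma>))) powr \<gamma>"

end

theory Submission
  imports Defs
begin

lemma ubp:
  fixes T :: "nat \<Rightarrow> 'a::banach \<Rightarrow> 'b::real_normed_vector"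
  assumes lin: "\<And>n. bounded_linear (T n)"
    and pb: "\<And>x. \<exists>B. \<forall>n. norm (T n x) \<le> B"
  shows "\<exists>C. \<forall>n x. norm (T n x) \<le> C * norm x"
proof -
  define F where "F k = {x. \<forall>n. norm (T n x) \<le> real k}" for k :: nat
  have clF: "closed (F k)" for k
  proof -
    have "F k = (\<Inter>n. {x. norm (T n x) \<le> real k})" by (auto simp: F_def)
    moreover have "closed {x. norm (T n x) \<le> real k}" for n
      by (intro closed_Collect_le continuous_intros linear_continuous_on[OF lin])
    ultimately show ?thesis by auto
  qed
  have UF0: "x \<in> \<Union>(range F)" for x
  proof -
    obtain B where B: "\<forall>n. norm (T n x) \<le> B" using pb by blast
    have "\<forall>n. norm (T n x) \<le> real (nat \<lceil>B\<rceil>)"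
      using B by (meson of_nat_ceiling order_trans real_nat_ceiling_ge)
    then show "x \<in> \<Union>(range F)" by (auto simp: F_def)
  qed
  have UF: "\<Union>(range F) = UNIV" using UF0 by blast
  have "\<exists>k. interior (F k) \<noteq> {}"
  proof (rule ccontr)
    assume "\<not> ?thesis"
    then have "euclidean interior_of \<Union>(range F) = {}"
      by (intro Baire_category_alt) (auto simp: completely_metrizable_space_euclidean clF)
    then show False using UF by simp
  qed
  then obtain k x0 where "x0 \<in> interior (F k)" by blast
  then obtain r where r: "r > 0" "ball x0 r \<subseteq> F k"
    by (meson mem_interior)
  show ?thesis
  proof (intro exI allI)
    fix n and z :: 'a
    show "norm (T n z) \<le> (4 * real k / r) * norm z"
    proof (cases "z = 0")
      case True then show ?thesis by (simp add: linear_simps lin)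
    next
      case False
      then have nz: "norm z > 0" by simp
      define w where "w = (r / (2 * norm z)) *\<^sub>R z"
      have nw: "norm w = r/2" using nz r by (simp add: w_def)
      have "x0 + w \<in> F k" using r nw by (intro subsetD[OF r(2)]) (simp add: dist_norm)
      moreover have "x0 \<in> F k" using r by (intro subsetD[OF r(2)]) simp
      ultimately have a: "norm (T n (x0 + w)) \<le> k" "norm (T n x0) \<le> k" by (auto simp: F_def)
      have "T n w = T n (x0 + w) - T n x0" by (simp add: linear_simps lin)
      then have "norm (T n w) \<le> 2 * k" using a norm_triangle_ineq4[of "T n (x0 + w)" "T n x0"] by simp
      moreover have "T n w = (r / (2 * norm z)) *\<^sub>R T n z" by (simp add: w_def linear_simps lin)
      ultimately have "(r / (2 * norm z)) * norm (T n z) \<le> 2 * k" using r nz by simp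
      then have "r * norm (T n z) \<le> 4 * k * norm z" using r nz by (simp add: field_simps)
      then show ?thesis using r by (simp add: field_simps)
    qed
  qed
qed

lemma c0_right_tendsto:
  assumes "c0_semigroup S"
  shows "((\<lambda>t. S t x) \<longlongrightarrow> x) (at_right 0)"
  using assms by (simp add: c0_semigroup_def)

lemma local_bound:
  fixes S :: "real \<Rightarrow> 'a::banach \<Rightarrow> 'a"
  assumes S: "c0_semigroup S"
  shows "\<exists>\<delta>>0. \<exists>C\<ge>1. \<forall>t. 0 < t \<and> t \<le> \<delta> \<longrightarrow> (\<forall>x. norm (S t x) \<le> C * norm x)"
proof (rule ccontr)
  assume "\<not> ?thesis"
  then have H: "\<forall>\<delta>>0. \<forall>C\<ge>1. \<exists>t. 0 < t \<and> t \<le> \<delta> \<and> (\<exists>x. norm (S t x) > C * norm x)"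
    by (auto simp: not_le) (meson not_le)
  have "\<forall>n::nat. \<exists>t. 0 < t \<and> t \<le> 1 / (real n + 1) \<and> (\<exists>x. norm (S t x) > (real n + 1) * norm x)"
  proof
    fix n :: nat
    have "1 / (real n + 1) > 0" "real n + 1 \<ge> 1" by auto
    then show "\<exists>t. 0 < t \<and> t \<le> 1 / (real n + 1) \<and> (\<exists>x. norm (S t x) > (real n + 1) * norm x)"
      using H by blast
  qed
  then obtain t xs where t: "\<And>n. 0 < t n" "\<And>n. t n \<le> 1 / (real n + 1)"
      and xs: "\<And>n. norm (S (t n) (xs n)) > (real n + 1) * norm (xs n)"
    by metis
  have lin: "bounded_linear (S (t n))" for n
    using S t(1)[of n] by (simp add: c0_semigroup_def)
  have t0: "t \<longlonglongrightarrow> 0"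
  proof (rule tendsto_sandwich[of "\<lambda>_. 0" _ _ "\<lambda>n. 1 / (real n + 1)"])
    show "\<forall>\<^sub>F n in sequentially. 0 \<le> t n" using t(1) by (simp add: less_imp_le)
    show "\<forall>\<^sub>F n in sequentially. t n \<le> 1 / (real n + 1)" using t(2) by simp
    show "(\<lambda>n. 1 / (real n + 1)) \<longlonglongrightarrow> 0" using LIMSEQ_inverse_real_of_nat_add[of 0]
      by (simp add: inverse_eq_divide add.commute)
  qed simp
  have tf: "filterlim t (at_right 0) sequentially"
    using t0 t(1) by (auto simp: filterlim_at less_imp_neq[symmetric] intro!: always_eventually)
  have "\<exists>B. \<forall>n. norm (S (t n) x) \<le> B" for x
  proof -
    have "(\<lambda>n. S (t n) x) \<longlonglongrightarrow> x"
      using filterlim_compose[OF c0_right_tendsto[OF S] tf] .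
    then have "bounded (range (\<lambda>n. S (t n) x))"
      by (rule convergent_imp_bounded)
    then show ?thesis by (auto simp: bounded_iff)
  qed
  then obtain C where C: "\<And>n x. norm (S (t n) x) \<le> C * norm x"
    using ubp[of "\<lambda>n. S (t n)"] lin by metis
  obtain n :: nat where n: "C \<le> real n" using real_arch_simple by blast
  have "norm (S (t n) (xs n)) \<le> (real n + 1) * norm (xs n)"
    using C[of n "xs n"] n by (meson add_increasing2 mult_right_mono norm_ge_zero order_trans zero_le_one)
  then show False using xs[of n] by simp
qed

lemma interval_bound:
  fixes S :: "real \<Rightarrow> 'a::banach \<Rightarrow> 'a"
  assumes S: "c0_semigroup S"
  shows "\<exists>K\<ge>1. \<forall>t. 0 \<le> t \<and> t \<le> T \<longrightarrow> (\<forall>x. norm (S t x) \<le> K * norm x)"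
proof -
  obtain \<delta> C where d: "\<delta> > 0" "C \<ge> 1" and b: "\<And>t x. 0 < t \<Longrightarrow> t \<le> \<delta> \<Longrightarrow> norm (S t x) \<le> C * norm x"
    using local_bound[OF S] by metis
  have S0: "S 0 x = x" for x using S by (simp add: c0_semigroup_def)
  have law: "S (s + t) x = S s (S t x)" if "s \<ge> 0" "t \<ge> 0" for s t x
    using S that by (simp add: c0_semigroup_def)
  have b': "norm (S t x) \<le> C * norm x" if "0 \<le> t" "t \<le> \<delta>" for t x
  proof (cases "t = 0")
    case True then show ?thesis using d by (simp add: S0 mult_le_cancel_right1)
  qed (use b that in auto)
  have main: "\<forall>t. 0 \<le> t \<and> t \<le> real n * \<delta> \<longrightarrow> (\<forall>x. norm (S t x) \<le> C ^ n * norm x)" for n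
  proof (induction n)
    case 0 show ?case
    proof (intro allI impI)
      fix t x assume "0 \<le> t \<and> t \<le> real 0 * \<delta>"
      then have "t = 0" by simp
      then show "norm (S t x) \<le> C ^ 0 * norm x" by (simp add: S0)
    qed
  next
    case (Suc n)
    show ?case
    proof (intro allI impI)
      fix t x assume tt: "0 \<le> t \<and> t \<le> real (Suc n) * \<delta>"
      show "norm (S t x) \<le> C ^ Suc n * norm x"
      proof (cases "t \<le> \<delta>")
        case True
        have "C \<le> C ^ Suc n" using d by (metis power_one_right power_increasing Suc_le_mono le0 One_nat_def)
        then show ?thesis using b'[of t x] tt True
          by (meson mult_right_mono norm_ge_zero order_trans)
      next
        case False
        have "S t x = S \<delta> (S (t - \<delta>) x)" using law[of \<delta> "t - \<delta>" x] False d by simp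
        also have "norm \<dots> \<le> C * norm (S (t - \<delta>) x)" using b'[of \<delta>] d by simp
        also have "\<dots> \<le> C * (C ^ n * norm x)"
          using Suc.IH tt False d by (intro mult_left_mono) (auto simp: algebra_simps)
        finally show ?thesis by simp
      qed
    qed
  qed
  obtain n :: nat where n: "T / \<delta> \<le> real n" using real_arch_simple by blast
  have "T \<le> real n * \<delta>" using n d by (simp add: field_simps)
  moreover have "C ^ n \<ge> 1" using d by simp
  ultimately show ?thesis using main[of n] by (metis order_trans)
qed

lemma c0_cont:
  fixes S :: "real \<Rightarrow> 'a::banach \<Rightarrow> 'a"
  assumes S: "c0_semigroup S"
  shows "continuous_on {0..} (\<lambda>t. S t x)"
  unfolding continuous_on_iff
proof (intro ballI allI impI)
  fix t0 :: real and e :: real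
  assume t0: "t0 \<in> {0..}" and e: "0 < e"
  have lin: "bounded_linear (S t)" if "t \<ge> 0" for t using S that by (simp add: c0_semigroup_def)
  have law: "S (s + t) x = S s (S t x)" if "s \<ge> 0" "t \<ge> 0" for s t x
    using S that by (simp add: c0_semigroup_def)
  obtain K where K: "K \<ge> 1" "\<And>t x. 0 \<le> t \<Longrightarrow> t \<le> t0 + 1 \<Longrightarrow> norm (S t x) \<le> K * norm x"
    using interval_bound[OF S, of "t0 + 1"] by metis
  have "\<forall>\<^sub>F h in at_right 0. dist (S h x) x < e / K"
    using c0_right_tendsto[OF S, of x] e K(1) by (simp add: tendsto_iff)
  then obtain d1 where d1: "d1 > 0" "\<And>h. 0 < h \<Longrightarrow> h < d1 \<Longrightarrow> dist (S h x) x < e / K"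
    by (auto simp: eventually_at_right_field)
  have key: "norm (S s (S h x) - S s x) < e" if "0 \<le> s" "s \<le> t0 + 1" "0 < h" "h < d1" for s h
  proof -
    have "S s (S h x) - S s x = S s (S h x - x)" using lin[OF that(1)] by (simp add: linear_simps)
    also have "norm \<dots> \<le> K * norm (S h x - x)" using K(2) that by simp
    also have "\<dots> < K * (e / K)" using d1(2)[OF that(3,4)] K(1) by (intro mult_strict_left_mono) (auto simp: dist_norm)
    also have "\<dots> = e" using K(1) by simp
    finally show ?thesis .
  qed
  show "\<exists>d>0. \<forall>t'\<in>{0..}. dist t' t0 < d \<longrightarrow> dist (S t' x) (S t0 x) < e"
  proof (intro exI[of _ "min d1 1"] conjI ballI impI)
    show "0 < min d1 1" using d1 by simp
    fix t' :: real assume t': "t' \<in> {0..}" "dist t' t0 < min d1 1"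
    consider "t' = t0" | "t' > t0" | "t' < t0" by linarith
    then show "dist (S t' x) (S t0 x) < e"
    proof cases
      case 1 then show ?thesis using e by simp
    next
      case 2
      have "S t' x = S t0 (S (t' - t0) x)" using law[of t0 "t' - t0" x] 2 t0 by simp
      then show ?thesis using key[of t0 "t' - t0"] t0 t' 2 by (simp add: dist_norm)
    next
      case 3
      have "S t0 x = S t' (S (t0 - t') x)" using law[of t' "t0 - t'" x] 3 t' by simp
      then show ?thesis using key[of t' "t0 - t'"] t0 t' 3 by (simp add: dist_norm norm_minus_commute)
    qed
  qed
qed

lemma vd_quot:
  fixes G :: "real \<Rightarrow> 'a::real_normed_vector"
  assumes G: "(G has_vector_derivative v) (at h within {a..b})" and hb: "a \<le> h" "h < b"
  shows "((\<lambda>r. (1/r) *\<^sub>R (G (h + r) - G h)) \<longlongrightarrow> v) (at_right 0)"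
proof -
  have "((\<lambda>y. (1 / norm (y - h)) *\<^sub>R (G y - (G h + (y - h) *\<^sub>R v))) \<longlongrightarrow> 0) (at h within {a..b})"
    using G by (simp add: has_vector_derivative_def has_derivative_within)
  moreover have "filterlim (\<lambda>r. h + r) (at h within {a..b}) (at_right 0)"
  proof (unfold filterlim_at, rule conjI)
    show "\<forall>\<^sub>F r in at_right 0. h + r \<in> {a..b} \<and> h + r \<noteq> h"
      unfolding eventually_at_right_field using hb by (intro exI[of _ "b - h"]) auto
    show "((\<lambda>r. h + r) \<longlongrightarrow> h) (at_right 0)"
      by (rule tendsto_eq_intros) (auto intro!: tendsto_eq_intros)
  qed
  ultimately have "((\<lambda>r. (1 / norm r) *\<^sub>R (G (h + r) - (G h + r *\<^sub>R v))) \<longlongrightarrow> 0) (at_right 0)"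
    using filterlim_compose by fastforce
  moreover have "\<forall>\<^sub>F r in at_right 0. (1 / norm r) *\<^sub>R (G (h + r) - (G h + r *\<^sub>R v)) = (1/r) *\<^sub>R (G (h + r) - G h) - v"
    unfolding eventually_at_right_field
    by (intro exI[of _ 1]) (auto simp: algebra_simps)
  ultimately have "((\<lambda>r. (1/r) *\<^sub>R (G (h + r) - G h) - v) \<longlongrightarrow> 0) (at_right 0)"
    using Lim_transform_eventually by fastforce
  then show ?thesis by (simp add: LIM_zero_iff)
qed

lemma gen_integral:
  fixes S :: "real \<Rightarrow> 'a::banach \<Rightarrow> 'a"
  assumes S: "c0_semigroup S" and gen: "is_generator S Dom A" and h: "h \<ge> 0"
  shows "integral {0..h} (\<lambda>s. S s x) \<in> Dom \<and> A (integral {0..h} (\<lambda>s. S s x)) = S h x - x"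
proof -
  define F where "F s = S s x" for s
  define G where "G u = integral {0..u} F" for u
  have lin: "bounded_linear (S t)" if "t \<ge> 0" for t using S that by (simp add: c0_semigroup_def)
  have law: "S (s + t) x = S s (S t x)" if "s \<ge> 0" "t \<ge> 0" for s t x
    using S that by (simp add: c0_semigroup_def)
  have S0: "S 0 x = x" using S by (simp add: c0_semigroup_def)
  have contF: "continuous_on {0..} F" using c0_cont[OF S] by (simp add: F_def)
  have contF': "continuous_on {a..b} F" if "0 \<le> a" for a b
    by (rule continuous_on_subset[OF contF]) (use that in auto)
  have intF: "F integrable_on {a..b}" if "0 \<le> a" for a b
    using contF'[OF that] by (rule integrable_continuous_interval)
  have shift: "S r (G h) = G (h + r) - G r" if r: "r > 0" for r
  proof -
    have "S r (G h) = integral {0..h} (S r \<circ> F)"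
      unfolding G_def using intF[of 0 h] lin[of r] r by (simp add: integral_linear)
    also have "\<dots> = integral {0..h} (\<lambda>s. F (1 *\<^sub>R s + r))"
    proof (rule integral_cong)
      fix s assume "s \<in> {0..h}"
      then show "(S r \<circ> F) s = F (1 *\<^sub>R s + r)" using law[of r s x] r by (simp add: F_def add.commute)
    qed
    also have "\<dots> = integral {r..h + r} F"
    proof -
      have "(F has_integral integral {r..h+r} F) (cbox r (h + r))"
        using intF[of r "h + r"] r by (simp add: integrable_integral)
      from has_integral_affinity'[OF this, of 1 r]
      show ?thesis by (simp add: integral_unique)
    qed
    also have "\<dots> = G (h + r) - G r"
    proof -
      have c: "integral {0..r} F + integral {r..h + r} F = integral {0..h + r} F"
        using Henstock_Kurzweil_Integration.integral_combine[where a=0 and c=r and b="h+r" and f=F] intF[of 0 "h + r"] r h by simp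
      show ?thesis unfolding G_def c[symmetric] by simp
    qed
    finally show ?thesis .
  qed
  have G0: "G 0 = 0" by (simp add: G_def)
  have dh: "((\<lambda>r. (1/r) *\<^sub>R (G (h + r) - G h)) \<longlongrightarrow> F h) (at_right 0)"
    unfolding G_def using h
    by (intro vd_quot[of _ _ _ 0 "h + 1"] integral_has_vector_derivative contF') auto
  have d0: "((\<lambda>r. (1/r) *\<^sub>R (G (0 + r) - G 0)) \<longlongrightarrow> F 0) (at_right 0)"
    unfolding G_def
    by (intro vd_quot[of _ _ _ 0 1] integral_has_vector_derivative contF') auto
  have lim: "((\<lambda>r. (1/r) *\<^sub>R (S r (G h) - G h)) \<longlongrightarrow> F h - F 0) (at_right 0)"
  proof -
    have "((\<lambda>r. (1/r) *\<^sub>R (G (h + r) - G h) - (1/r) *\<^sub>R (G (0 + r) - G 0)) \<longlongrightarrow> F h - F 0) (at_right 0)"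
      using dh d0 by (rule tendsto_diff)
    moreover have "\<forall>\<^sub>F r in at_right 0. (1/r) *\<^sub>R (G (h + r) - G h) - (1/r) *\<^sub>R (G (0 + r) - G 0) = (1/r) *\<^sub>R (S r (G h) - G h)"
      unfolding eventually_at_right_field
      by (intro exI[of _ 1]) (auto simp: shift G0 algebra_simps)
    ultimately show ?thesis using Lim_transform_eventually by fastforce
  qed
  have "G h \<in> Dom" using gen lim unfolding is_generator_def by blast
  moreover have "((\<lambda>r. (1/r) *\<^sub>R (S r (G h) - G h)) \<longlongrightarrow> A (G h)) (at_right 0)"
    using gen calculation unfolding is_generator_def by blast
  ultimately have "G h \<in> Dom \<and> A (G h) = F h - F 0"
    using lim tendsto_unique[OF trivial_limit_at_right_real] by blast
  moreover have "F = (\<lambda>s. S s x)" by (simp add: F_def fun_eq_iff)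
  ultimately show ?thesis by (simp add: G_def F_def S0)
qed


lemma ode_exp:
  fixes \<psi> :: "real \<Rightarrow> real"
  assumes cont: "continuous_on {0..} \<psi>"
    and eq: "\<And>h. h \<ge> 0 \<Longrightarrow> \<psi> h = \<psi> 0 + g * integral {0..h} \<psi>"
    and t: "t \<ge> 0"
  shows "\<psi> t = \<psi> 0 * exp (g * t)"
proof -
  have contT: "continuous_on {0..t} \<psi>" by (rule continuous_on_subset[OF cont]) auto
  have d\<psi>: "(\<psi> has_real_derivative g * \<psi> u) (at u within {0..t})" if u: "u \<in> {0..t}" for u
  proof -
    have "((\<lambda>h. \<psi> 0 + g * integral {0..h} \<psi>) has_real_derivative g * \<psi> u) (at u within {0..t})"
      using integral_has_real_derivative[OF contT u] by (auto intro!: derivative_eq_intros)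
    then show ?thesis
    proof (rule has_field_derivative_transform_within[where d=1])
      fix x assume "x \<in> {0..t}"
      then have "x \<ge> 0" by simp
      from eq[OF this] show "\<psi> 0 + g * integral {0..x} \<psi> = \<psi> x" by linarith
    qed (use u in auto)
  qed
  define \<phi> where "\<phi> u = \<psi> u * exp (- g * u)" for u
  have d\<phi>: "(\<phi> has_real_derivative 0) (at u within {0..t})" if u: "u \<in> {0..t}" for u
  proof -
    have e: "((\<lambda>u. exp (- g * u)) has_real_derivative exp (- g * u) * (- g)) (at u within {0..t})"
      by (auto intro!: derivative_eq_intros)
    have "(\<phi> has_real_derivative g * \<psi> u * exp (- g * u) + exp (- g * u) * (- g) * \<psi> u) (at u within {0..t})"
      unfolding \<phi>_def[abs_def] by (rule DERIV_mult[OF d\<psi>[OF u] e])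
    then show ?thesis by (simp add: algebra_simps)
  qed
  obtain c where "\<forall>u\<in>{0..t}. \<phi> u = c"
    using has_field_derivative_zero_constant[of "{0..t}" \<phi>] d\<phi> by auto
  then have "\<phi> t = \<phi> 0" using t by auto
  then have "\<psi> t * exp (- g * t) = \<psi> 0" by (simp add: \<phi>_def)
  then have "\<psi> t * exp (- g * t) * exp (g * t) = \<psi> 0 * exp (g * t)" by simp
  then show ?thesis by (simp add: mult.assoc exp_add[symmetric])
qed


lemma pw_identity:
  fixes a e b \<alpha> \<gamma> :: real
  assumes "a > 0" "e > 0" "b \<ge> 0" "\<alpha> > 0" "\<gamma> \<noteq> 0"
  shows "e * (a / (\<alpha> * e * b)) powr (1/\<gamma>) * b = a powr (1/\<gamma>) * (e * b) powr ((\<gamma> - 1)/\<gamma>) / \<alpha> powr (1/\<gamma>)"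
proof (cases "b = 0")
  case True then show ?thesis by simp
next
  case False
  then have b: "b > 0" using assms by simp
  have eb: "e * b > 0" using assms b by simp
  have ex: "(\<gamma> - 1)/\<gamma> = 1 - 1/\<gamma>" using assms by (simp add: field_simps)
  have "(a / (\<alpha> * e * b)) powr (1/\<gamma>) = a powr (1/\<gamma>) / (\<alpha> powr (1/\<gamma>) * (e * b) powr (1/\<gamma>))"
    by (simp add: powr_divide powr_mult mult.assoc)
  moreover have "(e * b) powr ((\<gamma> - 1)/\<gamma>) = (e * b) / (e * b) powr (1/\<gamma>)"
    unfolding ex powr_diff using eb by simp
  ultimately show ?thesis using eb assms by (simp add: field_simps)
qed

lemma Lp_density_nonneg:
  fixes rep :: "'x::banach \<Rightarrow> 'd \<Rightarrow> real"
  assumes model: "function_space_model (Lp p) M rep"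
    and b0_pos: "strictly_positive_functional (Lp p) M rep b0"
    and bd: "bd \<in> borel_measurable M" "\<forall>x. b0 x = (\<integral>\<theta>. rep x \<theta> * bd \<theta> \<partial>M)"
  shows "AE \<theta> in M. 0 \<le> bd \<theta>"
proof -
  from model have sf: "sigma_finite_measure M"
    and meas: "\<And>x. rep x \<in> borel_measurable M"
    and surj: "\<And>g. g \<in> borel_measurable M \<Longrightarrow> integrable M (\<lambda>\<theta>. \<bar>g \<theta>\<bar> powr p) \<Longrightarrow> \<exists>x. AE \<theta> in M. rep x \<theta> = g \<theta>"
    and lin: "\<And>c x \<theta>. rep (c *\<^sub>R x) \<theta> = c * rep x \<theta>"
    unfolding function_space_model_def by auto
  define A where "A = {\<theta>\<in>space M. bd \<theta> < 0}"
  have Asets: "A \<in> sets M" unfolding A_def using bd(1) by measurable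
  obtain C :: "nat \<Rightarrow> 'd set" where C: "range C \<subseteq> sets M" "(\<Union>i. C i) = space M" "\<And>i. emeasure M (C i) \<noteq> \<infinity>"
    using sigma_finite_measure.sigma_finite[OF sf] by metis
  have null: "A \<inter> C i \<in> null_sets M" for i
  proof (rule ccontr)
    define E where "E = A \<inter> C i"
    assume nn: "A \<inter> C i \<notin> null_sets M"
    have Esets: "E \<in> sets M" using Asets C(1) by (auto simp: E_def)
    have "emeasure M E \<le> emeasure M (C i)"
      by (rule emeasure_mono) (use C(1) in \<open>auto simp: E_def\<close>)
    then have Efin: "emeasure M E < \<infinity>"
      using C(3)[of i] by (simp add: less_top[symmetric]) (metis top.not_eq_extremum order.strict_trans1)
    have "integrable M (\<lambda>\<theta>. \<bar>indicator E \<theta> :: real\<bar> powr p)"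
    proof -
      have "(\<lambda>\<theta>. \<bar>indicator E \<theta> :: real\<bar> powr p) = indicator E"
        by (auto simp: fun_eq_iff indicator_def)
      then show ?thesis using Esets Efin by simp
    qed
    then obtain x where x: "AE \<theta> in M. rep x \<theta> = indicator E \<theta>"
      using surj[of "indicator E"] Esets by auto
    have "x \<noteq> 0"
    proof
      assume "x = 0"
      then have "rep x \<theta> = 0" for \<theta> using lin[of 0 x \<theta>] by simp
      then have "AE \<theta> in M. \<theta> \<notin> E" using x by (auto elim!: AE_mp intro!: AE_I2 simp: indicator_def)
      then have "E \<in> null_sets M" using AE_iff_null_sets[OF Esets] by simp
      then show False using nn by (simp add: E_def)
    qed
    moreover have "nonneg_fn (Lp p) M (rep x)"
    proof -
      have "AE \<theta> in M. 0 \<le> rep x \<theta>" using x by eventually_elim simp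
      then show ?thesis by (simp add: nonneg_fn_def)
    qed
    ultimately have pos: "0 < b0 x" using b0_pos by (simp add: strictly_positive_functional_def)
    have "b0 x = (\<integral>\<theta>. rep x \<theta> * bd \<theta> \<partial>M)" using bd(2) by simp
    also have "\<dots> = (\<integral>\<theta>. indicator E \<theta> * bd \<theta> \<partial>M)"
    proof (rule integral_cong_AE)
      show "(\<lambda>\<theta>. rep x \<theta> * bd \<theta>) \<in> borel_measurable M" using meas[of x] bd(1) by measurable
      show "(\<lambda>\<theta>. indicator E \<theta> * bd \<theta>) \<in> borel_measurable M" using Esets bd(1) by measurable
      show "AE \<theta> in M. rep x \<theta> * bd \<theta> = indicator E \<theta> * bd \<theta>" using x by eventually_elim simp
    qed
    also have "\<dots> \<le> 0"
    proof -
      have "0 \<le> (\<integral>\<theta>. - (indicator E \<theta> * bd \<theta>) \<partial>M)"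
        by (intro Bochner_Integration.integral_nonneg) (auto simp: indicator_def E_def A_def)
      then show ?thesis by simp
    qed
    finally show False using pos by simp
  qed
  have "(\<Union>i. A \<inter> C i) \<in> null_sets M" using null by blast
  moreover have "(\<Union>i. A \<inter> C i) = A" using C(2) by (auto simp: A_def)
  ultimately have "A \<in> null_sets M" by simp
  then have "AE \<theta> in M. \<theta> \<notin> A" using AE_iff_null_sets[OF Asets] by simp
  then show ?thesis using AE_space[of M] by eventually_elim (auto simp: A_def)
qed


theorem lemma3p7:
  fixes k :: "'d space_kind" and M :: "'d measure"
    and rep :: "'x::banach \<Rightarrow> 'd \<Rightarrow> real"
    and DomL :: "'x set" and L :: "'x \<Rightarrow> 'x"
    and \<eta> f bd :: "'d \<Rightarrow> real"
    and b0 :: "'x \<Rightarrow> real"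
    and lam0 \<gamma> \<rho> :: real
    and N \<Phi> :: "'x \<Rightarrow> 'x"
    and S :: "real \<Rightarrow> 'x \<Rightarrow> 'x"
    and x0 :: 'x
  assumes model: "function_space_model k M rep"
    and L_gen: "\<exists>T. c0_semigroup T \<and> is_generator T DomL L \<and>
                 (\<forall>t\<ge>0. \<forall>x. strictpos_fn k M (rep x) \<longrightarrow> strictpos_fn k M (rep (T t x)))"
    and eta_meas: "\<eta> \<in> borel_measurable M" and eta_pos: "\<forall>\<theta>\<in>space M. 0 < \<eta> \<theta>"
    and f_meas: "f \<in> borel_measurable M" and f_pos: "\<forall>\<theta>\<in>space M. 0 < f \<theta>"
    and gamma: "0 < \<gamma>" "\<gamma> \<noteq> 1"
    and rho: "0 < \<rho>"
    and b0_pos: "strictly_positive_functional k M rep b0"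
    and b0_density: "bd \<in> borel_measurable M" "\<forall>x. b0 x = (\<integral>\<theta>. rep x \<theta> * bd \<theta> \<partial>M)"
    and b0_eigen: "\<forall>x\<in>DomL. b0 (L x) = lam0 * b0 x"
    and rho_big: "\<rho> > lam0 * (1 - \<gamma>)"
    and gamma_big: "\<gamma> > 1 \<longrightarrow> (\<exists>C. AE \<theta> in M. \<bar>bd \<theta> powr (1 - \<gamma>) / f \<theta>\<bar> \<le> C)"
    and int1: "integrable M (\<lambda>\<theta>. f \<theta> powr (1/\<gamma>) * (\<eta> \<theta> * bd \<theta>) powr ((\<gamma> - 1)/\<gamma>))"
    and case_Cont: "\<forall>d. k = Cont d \<longrightarrow>
          continuous_map (ctop M d) euclideanreal \<eta> \<and>
          continuous_map (ctop M d) euclideanreal f \<and>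
          continuous_map (ctop M d) euclideanreal bd \<and> (\<forall>\<theta>\<in>space M. 0 < bd \<theta>)"
    and case_Lp: "\<forall>p. k = Lp p \<longrightarrow>
          (\<exists>C. AE \<theta> in M. \<eta> \<theta> \<le> C) \<and> (\<exists>C. AE \<theta> in M. f \<theta> \<le> C) \<and>
          integrable M (\<lambda>\<theta>. (f \<theta> / (\<eta> \<theta> * bd \<theta>)) powr (p/\<gamma>))"
    and N_def: "\<forall>z. eq_fn k M (rep (N z)) (\<lambda>\<theta>. \<eta> \<theta> * rep z \<theta>)"
    and Phi_def: "\<forall>x. eq_fn k M (rep (\<Phi> x))
          (\<lambda>\<theta>. (f \<theta> / (alpha_const M \<eta> f bd \<gamma> \<rho> lam0 * \<eta> \<theta> * bd \<theta>)) powr (1/\<gamma>) * b0 x)"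
    and S_gen: "c0_semigroup S" "is_generator S DomL (\<lambda>x. L x - N (\<Phi> x))"
    and x0_pos: "b0 x0 > 0"
  shows "\<forall>t\<ge>0. b0 (S t x0) = b0 x0 * exp (((lam0 - \<rho>) / \<gamma>) * t) \<and> b0 (S t x0) > 0"
proof -
  define g where "g = (lam0 - \<rho>) / \<gamma>"
  have b0lin: "bounded_linear b0" using b0_pos by (simp add: strictly_positive_functional_def)
  define I where "I = (\<integral>\<theta>. f \<theta> powr (1/\<gamma>) * (\<eta> \<theta> * bd \<theta>) powr ((\<gamma> - 1)/\<gamma>) \<partial>M)"
  define c where "c = \<rho> - lam0 * (1 - \<gamma>)"
  define \<alpha> where "\<alpha> = alpha_const M \<eta> f bd \<gamma> \<rho> lam0"
  have c_pos: "c > 0" using rho_big by (simp add: c_def)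
  have bd_nn: "AE \<theta> in M. 0 \<le> bd \<theta>"
  proof (cases k)
    case (Lp p) then show ?thesis
      using Lp_density_nonneg[of p M rep b0 bd] model b0_pos b0_density by simp
  next
    case (Cont d) then have "\<forall>\<theta>\<in>space M. 0 < bd \<theta>" using case_Cont by auto
    then show ?thesis by (auto intro!: AE_I2 less_imp_le)
  qed
  have I_pos: "I > 0"
  proof -
    have nn: "I \<ge> 0" unfolding I_def by (intro Bochner_Integration.integral_nonneg) simp
    have "I \<noteq> 0"
    proof
      assume "I = 0"
      then have "AE \<theta> in M. f \<theta> powr (1/\<gamma>) * (\<eta> \<theta> * bd \<theta>) powr ((\<gamma> - 1)/\<gamma>) = 0"
        using integral_nonneg_eq_0_iff_AE[OF int1] unfolding I_def by simp
      then have "AE \<theta> in M. bd \<theta> = 0" using AE_space[of M]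
      proof eventually_elim
        case (elim \<theta>)
        then show ?case using f_pos eta_pos by auto
      qed
      then have "AE \<theta> in M. rep x0 \<theta> * bd \<theta> = 0" by eventually_elim simp
      then have "b0 x0 = 0" using b0_density(2) integral_eq_zero_AE by metis
      then show False using x0_pos by simp
    qed
    with nn show ?thesis by simp
  qed
  have \<alpha>_eq: "\<alpha> = \<gamma> powr \<gamma> * (I / c) powr \<gamma>" by (simp add: \<alpha>_def alpha_const_def I_def c_def)
  have \<alpha>_pos: "\<alpha> > 0" using I_pos c_pos gamma by (simp add: \<alpha>_eq)
  have \<alpha>_root: "\<alpha> powr (1/\<gamma>) = \<gamma> * I / c"
    using I_pos c_pos gamma by (simp add: \<alpha>_eq powr_mult powr_powr)
  define hh where "hh \<theta> = \<eta> \<theta> * (f \<theta> / (\<alpha> * \<eta> \<theta> * bd \<theta>)) powr (1/\<gamma>) * bd \<theta>" for \<theta>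
  have hh_meas: "hh \<in> borel_measurable M" unfolding hh_def using eta_meas f_meas b0_density(1) by measurable
  have hh_int: "(\<integral>\<theta>. hh \<theta> \<partial>M) = c / \<gamma>"
  proof -
    have "(\<integral>\<theta>. hh \<theta> \<partial>M) = (\<integral>\<theta>. f \<theta> powr (1/\<gamma>) * (\<eta> \<theta> * bd \<theta>) powr ((\<gamma> - 1)/\<gamma>) / \<alpha> powr (1/\<gamma>) \<partial>M)"
    proof (rule integral_cong_AE)
      show "hh \<in> borel_measurable M" by (rule hh_meas)
      show "(\<lambda>\<theta>. f \<theta> powr (1/\<gamma>) * (\<eta> \<theta> * bd \<theta>) powr ((\<gamma> - 1)/\<gamma>) / \<alpha> powr (1/\<gamma>)) \<in> borel_measurable M"
        using eta_meas f_meas b0_density(1) by measurable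
      show "AE \<theta> in M. hh \<theta> = f \<theta> powr (1/\<gamma>) * (\<eta> \<theta> * bd \<theta>) powr ((\<gamma> - 1)/\<gamma>) / \<alpha> powr (1/\<gamma>)"
        using bd_nn AE_space[of M]
      proof eventually_elim
        case (elim \<theta>)
        then show ?case unfolding hh_def
          using pw_identity[of "f \<theta>" "\<eta> \<theta>" "bd \<theta>" \<alpha> \<gamma>] f_pos eta_pos \<alpha>_pos gamma by auto
      qed
    qed
    also have "\<dots> = I / \<alpha> powr (1/\<gamma>)" by (simp add: I_def)
    also have "\<dots> = c / \<gamma>" using I_pos c_pos gamma by (simp add: \<alpha>_root)
    finally show ?thesis .
  qed
  have NPhi: "b0 (N (\<Phi> y)) = b0 y * (c / \<gamma>)" for y
  proof -
    have "b0 (N (\<Phi> y)) = (\<integral>\<theta>. rep (N (\<Phi> y)) \<theta> * bd \<theta> \<partial>M)" using b0_density(2) by simp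
    also have "\<dots> = (\<integral>\<theta>. b0 y * hh \<theta> \<partial>M)"
    proof (cases k)
      case (Lp p)
      have m: "rep z \<in> borel_measurable M" for z using model Lp by (simp add: function_space_model_def)
      have e1: "AE \<theta> in M. rep (N (\<Phi> y)) \<theta> = \<eta> \<theta> * rep (\<Phi> y) \<theta>"
        using N_def Lp by (simp add: eq_fn_def)
      have e2: "AE \<theta> in M. rep (\<Phi> y) \<theta> = (f \<theta> / (\<alpha> * \<eta> \<theta> * bd \<theta>)) powr (1/\<gamma>) * b0 y"
        using Phi_def Lp by (simp add: eq_fn_def \<alpha>_def)
      show ?thesis
      proof (rule integral_cong_AE)
        show "(\<lambda>\<theta>. rep (N (\<Phi> y)) \<theta> * bd \<theta>) \<in> borel_measurable M" using m b0_density(1) by measurable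
        show "(\<lambda>\<theta>. b0 y * hh \<theta>) \<in> borel_measurable M" using hh_meas by measurable
        show "AE \<theta> in M. rep (N (\<Phi> y)) \<theta> * bd \<theta> = b0 y * hh \<theta>"
          using e1 e2 by eventually_elim (simp add: hh_def algebra_simps)
      qed
    next
      case (Cont d)
      have e1: "\<forall>\<theta>\<in>space M. rep (N (\<Phi> y)) \<theta> = \<eta> \<theta> * rep (\<Phi> y) \<theta>"
        using N_def Cont by (simp add: eq_fn_def)
      have e2: "\<forall>\<theta>\<in>space M. rep (\<Phi> y) \<theta> = (f \<theta> / (\<alpha> * \<eta> \<theta> * bd \<theta>)) powr (1/\<gamma>) * b0 y"
        using Phi_def Cont by (simp add: eq_fn_def \<alpha>_def)
      show ?thesis
        by (rule Bochner_Integration.integral_cong) (use e1 e2 in \<open>auto simp: hh_def algebra_simps\<close>)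
    qed
    also have "\<dots> = b0 y * (c / \<gamma>)" by (simp add: hh_int)
    finally show ?thesis .
  qed
  have Beig: "b0 (L y - N (\<Phi> y)) = g * b0 y" if "y \<in> DomL" for y
  proof -
    have "b0 (L y - N (\<Phi> y)) = b0 (L y) - b0 (N (\<Phi> y))" by (simp add: linear_diff[OF bounded_linear.linear[OF b0lin]])
    also have "\<dots> = lam0 * b0 y - b0 y * (c / \<gamma>)" using b0_eigen that NPhi by simp
    also have "\<dots> = g * b0 y" using gamma by (simp add: g_def c_def field_simps)
    finally show ?thesis .
  qed
  define \<psi> where "\<psi> t = b0 (S t x0)" for t
  have S0: "S 0 x0 = x0" using S_gen(1) by (simp add: c0_semigroup_def)
  have cont\<psi>: "continuous_on {0..} \<psi>"
  proof -
    have "continuous_on {0..} (b0 \<circ> (\<lambda>t. S t x0))"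
      by (rule continuous_on_compose[OF c0_cont[OF S_gen(1)] continuous_on_subset[OF linear_continuous_on[OF b0lin]]]) auto
    then show ?thesis by (simp add: \<psi>_def[abs_def] o_def)
  qed
  have eq: "\<psi> h = \<psi> 0 + g * integral {0..h} \<psi>" if h: "h \<ge> 0" for h
  proof -
    define y where "y = integral {0..h} (\<lambda>s. S s x0)"
    have gi: "y \<in> DomL" "L y - N (\<Phi> y) = S h x0 - x0"
      using gen_integral[OF S_gen(1) S_gen(2) h, of x0] by (simp_all add: y_def)
    have "integral {0..h} \<psi> = b0 y"
    proof -
      have "(\<lambda>s. S s x0) integrable_on {0..h}"
        by (rule integrable_continuous_interval, rule continuous_on_subset[OF c0_cont[OF S_gen(1)]]) auto
      then have "integral {0..h} (b0 \<circ> (\<lambda>s. S s x0)) = b0 y"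
        unfolding y_def using b0lin by (rule integral_linear)
      then show ?thesis by (simp add: \<psi>_def[abs_def] o_def)
    qed
    moreover have "b0 (S h x0 - x0) = g * b0 y" using Beig[OF gi(1)] gi(2) by simp
    ultimately show ?thesis by (simp add: \<psi>_def S0 linear_diff[OF bounded_linear.linear[OF b0lin]])
  qed
  show ?thesis
  proof (intro allI impI conjI)
    fix t :: real assume t: "t \<ge> 0"
    have "\<psi> t = \<psi> 0 * exp (g * t)" by (rule ode_exp[OF cont\<psi> eq t])
    then show "b0 (S t x0) = b0 x0 * exp ((lam0 - \<rho>) / \<gamma> * t)" by (simp add: \<psi>_def S0 g_def)
    then show "b0 (S t x0) > 0" using x0_pos by simp
  qed
qed

end
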